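(* Let $(M_I,\triangleright)$ be a prefactor system, $\alpha$ a consistent set in it, and $b_i\in M_i$ for some $i\in I$. The following are equivalent: (1) $b_i\in\alpha^m$; (2) $\alpha\cup\{b_i\}$ is a consistent set; (3) there are cofinally many $i'\in I$ such that $a_{i'}\triangleright b_i$ for some $a_{i'}\in\alpha\cap M_{i'}$; (4) $a_{i'}\triangleright b_i$ for all $a_{i'}\in\alpha$ with $i'\ge i$; (5) the set of $i'\in I$ such that $a_{i'}\triangleright b_i$ for some $a_{i'}\in\alpha\cap M_{i'}$ contains a member of $\mathcal F(I)$.
   Context: Let $(I,\le)$ be a non-empty directed preordered set. Fix a family $\mathcal F(I)$ of subsets of $I$ such that every member of $\mathcal F(I)$ is cofinal in $I$ (for every $i$ there is $i'\ge i$ in it), $\mathcal F(I)$ is closed under supersets and finite intersections (it is a proper filter on the cofinal subsets), and $\mathcal F(I)$ contains every non-empty upward closed subset of $I$. A system $(M_I,\triangleright)$ consists of sets $M_i$ ($i\in I$, pairwise disjoint) and relations $\triangleright\subseteq M_{i'}\times M_i$ for $i\le i'$, reflexive for $i=i'$. $a_i\approx b_j$ iff there are $i'\ge i,j$ and $c\in M_{i'}$ with $c\triangleright a_i$, $c\triangleright b_j$. A prefactor system is a system with $a_{i'}\approx a_i\iff a_{i'}\triangleright a_i$ for all $i\le i'$. A consistent set is a set $\alpha\subseteq\bigcup_{i\in I}M_i$ such that $a_{i'}\triangleright a_i$ for all $a_{i'},a_i\in\alpha$ with $a_{i'}\in M_{i'}$, $a_i\in M_i$, $i'\ge i$, and such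 that $I_\alpha:=\{i\in I\mid \alpha\cap M_i\ne\emptyset\}\in\mathcal F(I)$. A dynamic element is a consistent set that is maximal under inclusion; for every consistent set $\alpha$ in a prefactor system there is exactly one dynamic element containing $\alpha$, denoted $\alpha^m$. *)

theory Defs
  imports Main
begin

text \<open>The index set is a carrier I with a preorder le.  The elements of all M i live in
  one type 'a; the relation tri c a encodes c \<triangleright> a (only between M i' and M i with le i i').\<close>

definition directed_preorder :: "'i set \<Rightarrow> ('i \<Rightarrow> 'i \<Rightarrow> bool) \<Rightarrow> bool" where
  "directed_preorder I le \<longleftrightarrow> I \<noteq> {}
     \<and> (\<forall>i\<in>I. le i i)
     \<and> (\<forall>i\<in>I. \<forall>j\<in>I. \<forall>k\<in>I. le i j \<longrightarrow> le j k \<longrightarrow> le i k)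
     \<and> (\<forall>i\<in>I. \<forall>j\<in>I. \<exists>k\<in>I. le i k \<and> le j k)"

definition cofinal_in :: "'i set \<Rightarrow> ('i \<Rightarrow> 'i \<Rightarrow> bool) \<Rightarrow> 'i set \<Rightarrow> bool" where
  "cofinal_in I le S \<longleftrightarrow> S \<subseteq> I \<and> (\<forall>i\<in>I. \<exists>i'\<in>S. le i i')"

definition upward_closed :: "'i set \<Rightarrow> ('i \<Rightarrow> 'i \<Rightarrow> bool) \<Rightarrow> 'i set \<Rightarrow> bool" where
  "upward_closed I le S \<longleftrightarrow> S \<subseteq> I \<and> (\<forall>i\<in>S. \<forall>i'\<in>I. le i i' \<longrightarrow> i' \<in> S)"

definition admissible_filter :: "'i set \<Rightarrow> ('i \<Rightarrow> 'i \<Rightarrow> bool) \<Rightarrow> 'i set set \<Rightarrow> bool" where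
  "admissible_filter I le F \<longleftrightarrow>
       (\<forall>S\<in>F. cofinal_in I le S)
     \<and> (\<forall>S\<in>F. \<forall>T. S \<subseteq> T \<and> T \<subseteq> I \<longrightarrow> T \<in> F)
     \<and> (\<forall>S\<in>F. \<forall>T\<in>F. S \<inter> T \<in> F)
     \<and> (\<forall>S. S \<noteq> {} \<and> upward_closed I le S \<longrightarrow> S \<in> F)"

definition sys :: "'i set \<Rightarrow> ('i \<Rightarrow> 'i \<Rightarrow> bool) \<Rightarrow> ('i \<Rightarrow> 'a set) \<Rightarrow> ('a \<Rightarrow> 'a \<Rightarrow> bool) \<Rightarrow> bool" where
  "sys I le M tri \<longleftrightarrow>
       (\<forall>i\<in>I. \<forall>j\<in>I. i \<noteq> j \<longrightarrow> M i \<inter> M j = {})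
     \<and> (\<forall>c a. tri c a \<longrightarrow> (\<exists>i\<in>I. \<exists>i'\<in>I. le i i' \<and> c \<in> M i' \<and> a \<in> M i))
     \<and> (\<forall>i\<in>I. \<forall>a\<in>M i. tri a a)"

definition approx :: "'i set \<Rightarrow> ('i \<Rightarrow> 'i \<Rightarrow> bool) \<Rightarrow> ('i \<Rightarrow> 'a set) \<Rightarrow> ('a \<Rightarrow> 'a \<Rightarrow> bool)
    \<Rightarrow> 'i \<Rightarrow> 'a \<Rightarrow> 'i \<Rightarrow> 'a \<Rightarrow> bool" where
  "approx I le M tri i a j b \<longleftrightarrow> (\<exists>i'\<in>I. le i i' \<and> le j i' \<and> (\<exists>c\<in>M i'. tri c a \<and> tri c b))"

definition prefactor_system :: "'i set \<Rightarrow> ('i \<Rightarrow> 'i \<Rightarrow> bool) \<Rightarrow> 'i set set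
    \<Rightarrow> ('i \<Rightarrow> 'a set) \<Rightarrow> ('a \<Rightarrow> 'a \<Rightarrow> bool) \<Rightarrow> bool" where
  "prefactor_system I le F M tri \<longleftrightarrow>
       directed_preorder I le \<and> admissible_filter I le F \<and> sys I le M tri
     \<and> (\<forall>i\<in>I. \<forall>i'\<in>I. le i i' \<longrightarrow> (\<forall>a\<in>M i'. \<forall>b\<in>M i.
            approx I le M tri i' a i b \<longleftrightarrow> tri a b))"

definition index_set :: "'i set \<Rightarrow> ('i \<Rightarrow> 'a set) \<Rightarrow> 'a set \<Rightarrow> 'i set" where
  "index_set I M \<alpha> = {i\<in>I. \<alpha> \<inter> M i \<noteq> {}}"

definition consistent :: "'i set \<Rightarrow> ('i \<Rightarrow> 'i \<Rightarrow> bool) \<Rightarrow> 'i set set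
    \<Rightarrow> ('i \<Rightarrow> 'a set) \<Rightarrow> ('a \<Rightarrow> 'a \<Rightarrow> bool) \<Rightarrow> 'a set \<Rightarrow> bool" where
  "consistent I le F M tri \<alpha> \<longleftrightarrow>
       \<alpha> \<subseteq> (\<Union>i\<in>I. M i)
     \<and> (\<forall>i\<in>I. \<forall>i'\<in>I. le i i' \<longrightarrow> (\<forall>a\<in>\<alpha> \<inter> M i'. \<forall>b\<in>\<alpha> \<inter> M i. tri a b))
     \<and> index_set I M \<alpha> \<in> F"

definition dynamic_element :: "'i set \<Rightarrow> ('i \<Rightarrow> 'i \<Rightarrow> bool) \<Rightarrow> 'i set set
    \<Rightarrow> ('i \<Rightarrow> 'a set) \<Rightarrow> ('a \<Rightarrow> 'a \<Rightarrow> bool) \<Rightarrow> 'a set \<Rightarrow> bool" where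
  "dynamic_element I le F M tri \<alpha> \<longleftrightarrow>
       consistent I le F M tri \<alpha>
     \<and> (\<forall>\<beta>. consistent I le F M tri \<beta> \<and> \<alpha> \<subseteq> \<beta> \<longrightarrow> \<beta> = \<alpha>)"

text \<open>\<alpha>^m: the (unique) dynamic element containing \<alpha>.\<close>
definition dyn_closure :: "'i set \<Rightarrow> ('i \<Rightarrow> 'i \<Rightarrow> bool) \<Rightarrow> 'i set set
    \<Rightarrow> ('i \<Rightarrow> 'a set) \<Rightarrow> ('a \<Rightarrow> 'a \<Rightarrow> bool) \<Rightarrow> 'a set \<Rightarrow> 'a set" where
  "dyn_closure I le F M tri \<alpha> = (THE \<beta>. dynamic_element I le F M tri \<beta> \<and> \<alpha> \<subseteq> \<beta>)"

end

theory Submission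
  imports Defs
begin

definition c3 :: "'i set \<Rightarrow> ('i \<Rightarrow> 'i \<Rightarrow> bool) \<Rightarrow> ('i \<Rightarrow> 'a set) \<Rightarrow> ('a \<Rightarrow> 'a \<Rightarrow> bool) \<Rightarrow> 'a set \<Rightarrow> 'a \<Rightarrow> bool" where
  "c3 I le M tri \<alpha> b \<longleftrightarrow> (\<forall>j\<in>I. \<exists>i'\<in>I. le j i' \<and> (\<exists>a\<in>\<alpha> \<inter> M i'. tri a b))"

lemma pf_facts:
  assumes "prefactor_system I le F M tri"
  shows "\<And>i. i \<in> I \<Longrightarrow> le i i"
    and "\<And>i j k. i \<in> I \<Longrightarrow> j \<in> I \<Longrightarrow> k \<in> I \<Longrightarrow> le i j \<Longrightarrow> le j k \<Longrightarrow> le i k"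
    and "\<And>S. S \<in> F \<Longrightarrow> cofinal_in I le S"
    and "\<And>S T. S \<in> F \<Longrightarrow> S \<subseteq> T \<Longrightarrow> T \<subseteq> I \<Longrightarrow> T \<in> F"
    and "\<And>S T. S \<in> F \<Longrightarrow> T \<in> F \<Longrightarrow> S \<inter> T \<in> F"
    and "\<And>S. S \<noteq> {} \<Longrightarrow> upward_closed I le S \<Longrightarrow> S \<in> F"
    and "\<And>i j. i \<in> I \<Longrightarrow> j \<in> I \<Longrightarrow> i \<noteq> j \<Longrightarrow> M i \<inter> M j = {}"
    and "\<And>i a. i \<in> I \<Longrightarrow> a \<in> M i \<Longrightarrow> tri a a"
    and "\<And>i i' a b. i \<in> I \<Longrightarrow> i' \<in> I \<Longrightarrow> le i i' \<Longrightarrow> a \<in> M i' \<Longrightarrow> b \<in> M i \<Longrightarrow>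
           approx I le M tri i' a i b \<Longrightarrow> tri a b"
proof -
  have d: "directed_preorder I le" and a: "admissible_filter I le F" and s: "sys I le M tri"
    and p: "\<forall>i\<in>I. \<forall>i'\<in>I. le i i' \<longrightarrow> (\<forall>a\<in>M i'. \<forall>b\<in>M i.
            approx I le M tri i' a i b \<longleftrightarrow> tri a b)"
    using assms unfolding prefactor_system_def by auto
  show "\<And>i. i \<in> I \<Longrightarrow> le i i" using d unfolding directed_preorder_def by auto
  show "\<And>i j k. i \<in> I \<Longrightarrow> j \<in> I \<Longrightarrow> k \<in> I \<Longrightarrow> le i j \<Longrightarrow> le j k \<Longrightarrow> le i k"
    using d unfolding directed_preorder_def by metis
  show "\<And>S. S \<in> F \<Longrightarrow> cofinal_in I le S" using a unfolding admissible_filter_def by auto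
  show "\<And>S T. S \<in> F \<Longrightarrow> S \<subseteq> T \<Longrightarrow> T \<subseteq> I \<Longrightarrow> T \<in> F"
    using a unfolding admissible_filter_def by auto
  show "\<And>S T. S \<in> F \<Longrightarrow> T \<in> F \<Longrightarrow> S \<inter> T \<in> F" using a unfolding admissible_filter_def by auto
  show "\<And>S. S \<noteq> {} \<Longrightarrow> upward_closed I le S \<Longrightarrow> S \<in> F" using a unfolding admissible_filter_def by auto
  show "\<And>i j. i \<in> I \<Longrightarrow> j \<in> I \<Longrightarrow> i \<noteq> j \<Longrightarrow> M i \<inter> M j = {}"
    using s unfolding sys_def by auto
  show "\<And>i a. i \<in> I \<Longrightarrow> a \<in> M i \<Longrightarrow> tri a a" using s unfolding sys_def by auto
  show "\<And>i i' a b. i \<in> I \<Longrightarrow> i' \<in> I \<Longrightarrow> le i i' \<Longrightarrow> a \<in> M i' \<Longrightarrow> b \<in> M i \<Longrightarrow>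
           approx I le M tri i' a i b \<Longrightarrow> tri a b" using p by blast
qed

lemma up_in_F:
  assumes pf: "prefactor_system I le F M tri" and iI: "i \<in> I"
  shows "{i'\<in>I. le i i'} \<in> F"
proof -
  note f = pf_facts[OF pf]
  show ?thesis
    apply (rule f(6))
    using iI f(1) apply blast
    unfolding upward_closed_def using f(2) iI by blast
qed

lemma c3_c4:
  assumes pf: "prefactor_system I le F M tri"
    and cons: "consistent I le F M tri \<alpha>"
    and iI: "i \<in> I" and bM: "b \<in> M i"
    and h: "c3 I le M tri \<alpha> b"
    and i'I: "i' \<in> I" and le: "le i i'" and a: "a \<in> \<alpha> \<inter> M i'"
  shows "tri a b"
proof -
  note f = pf_facts[OF pf]
  from h i'I obtain k a'' where kI: "k \<in> I" and "le i' k" and a'': "a'' \<in> \<alpha> \<inter> M k" "tri a'' b"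
    unfolding c3_def by blast
  have "tri a'' a" using cons unfolding consistent_def using kI i'I \<open>le i' k\<close> a'' a by blast
  moreover have "le i k" using f(2)[OF iI i'I kI le \<open>le i' k\<close>] .
  ultimately have "approx I le M tri i' a i b"
    unfolding approx_def using kI \<open>le i' k\<close> a'' by blast
  then show ?thesis using f(9)[OF iI i'I le] a bM by blast
qed

lemma c4_c3:
  assumes pf: "prefactor_system I le F M tri"
    and cons: "consistent I le F M tri \<alpha>"
    and iI: "i \<in> I"
    and h: "\<forall>i'\<in>I. le i i' \<longrightarrow> (\<forall>a\<in>\<alpha> \<inter> M i'. tri a b)"
  shows "c3 I le M tri \<alpha> b"
proof -
  note f = pf_facts[OF pf]
  have "index_set I M \<alpha> \<inter> {i'\<in>I. le i i'} \<in> F"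
    using f(5) cons up_in_F[OF pf iI] unfolding consistent_def by blast
  then have cf: "cofinal_in I le (index_set I M \<alpha> \<inter> {i'\<in>I. le i i'})" using f(3) by blast
  show ?thesis unfolding c3_def
  proof
    fix j assume "j \<in> I"
    then obtain i' where "i' \<in> index_set I M \<alpha> \<inter> {i'\<in>I. le i i'}" "le j i'"
      using cf unfolding cofinal_in_def by blast
    then show "\<exists>i'\<in>I. le j i' \<and> (\<exists>a\<in>\<alpha> \<inter> M i'. tri a b)"
      using h unfolding index_set_def by blast
  qed
qed

lemma c3_cons:
  assumes pf: "prefactor_system I le F M tri"
    and cons: "consistent I le F M tri \<alpha>"
    and iI: "i \<in> I" and bM: "b \<in> M i"
    and h: "c3 I le M tri \<alpha> b"
  shows "consistent I le F M tri (\<alpha> \<union> {b})"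
proof -
  note f = pf_facts[OF pf]
  have A: "\<alpha> \<union> {b} \<subseteq> (\<Union>i\<in>I. M i)" using cons iI bM unfolding consistent_def by blast
  have C: "index_set I M (\<alpha> \<union> {b}) \<in> F"
    apply (rule f(4)[of "index_set I M \<alpha>"])
    using cons unfolding consistent_def index_set_def by auto
  have B: "tri x y" if "j \<in> I" "j' \<in> I" "le j j'" "x \<in> (\<alpha> \<union> {b}) \<inter> M j'" "y \<in> (\<alpha> \<union> {b}) \<inter> M j"
    for j j' x y
  proof (cases "x = b")
    case True
    then have "j' = i" using f(7)[OF iI that(2)] bM that(4) by blast
    show ?thesis
    proof (cases "y = b")
      case True then show ?thesis using \<open>x = b\<close> f(8)[OF iI bM] by simp
    next
      case False
      then have y: "y \<in> \<alpha> \<inter> M j" using that(5) by blast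
      from h iI obtain k a'' where kI: "k \<in> I" and "le i k" and a'': "a'' \<in> \<alpha> \<inter> M k" "tri a'' b"
        unfolding c3_def by blast
      have "le j k" using f(2)[OF that(1) iI kI] \<open>le i k\<close> that(3) \<open>j' = i\<close> by blast
      have "tri a'' y" using cons unfolding consistent_def using kI that(1) \<open>le j k\<close> a'' y by blast
      then have "approx I le M tri i b j y"
        unfolding approx_def using kI \<open>le i k\<close> \<open>le j k\<close> a'' by blast
      then show ?thesis using f(9)[OF that(1) iI] that(3) \<open>j' = i\<close> bM y \<open>x = b\<close> by blast
    qed
  next
    case False
    then have x: "x \<in> \<alpha> \<inter> M j'" using that(4) by blast
    show ?thesis
    proof (cases "y = b")
      case True
      then have "j = i" using f(7)[OF iI that(1)] bM that(5) by blast
      then show ?thesis using c3_c4[OF pf cons iI bM h that(2) _ x] that(3) True by blast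
    next
      case False
      then show ?thesis using x that cons unfolding consistent_def by blast
    qed
  qed
  show ?thesis unfolding consistent_def using A B C by blast
qed

lemma dyn_char:
  assumes pf: "prefactor_system I le F M tri"
    and cons: "consistent I le F M tri \<alpha>"
    and dyn: "dynamic_element I le F M tri \<beta>" and sub: "\<alpha> \<subseteq> \<beta>"
  shows "\<beta> = {b. \<exists>i\<in>I. b \<in> M i \<and> c3 I le M tri \<alpha> b}"
proof (intro set_eqI iffI)
  fix b assume bb: "b \<in> \<beta>"
  have cb: "consistent I le F M tri \<beta>" using dyn unfolding dynamic_element_def by blast
  then obtain i where iI: "i \<in> I" and bM: "b \<in> M i" using bb unfolding consistent_def by blast
  have h4: "\<forall>i'\<in>I. le i i' \<longrightarrow> (\<forall>a\<in>\<beta> \<inter> M i'. tri a b)"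
    using cb bb iI bM unfolding consistent_def by blast
  then have "\<forall>i'\<in>I. le i i' \<longrightarrow> (\<forall>a\<in>\<alpha> \<inter> M i'. tri a b)" using sub by blast
  then have "c3 I le M tri \<alpha> b" using c4_c3[OF pf cons iI] by blast
  then show "b \<in> {b. \<exists>i\<in>I. b \<in> M i \<and> c3 I le M tri \<alpha> b}" using iI bM by blast
next
  fix b assume "b \<in> {b. \<exists>i\<in>I. b \<in> M i \<and> c3 I le M tri \<alpha> b}"
  then obtain i where iI: "i \<in> I" and bM: "b \<in> M i" and h: "c3 I le M tri \<alpha> b" by blast
  have cb: "consistent I le F M tri \<beta>" using dyn unfolding dynamic_element_def by blast
  have "c3 I le M tri \<beta> b" using h sub unfolding c3_def by blast
  then have "consistent I le F M tri (\<beta> \<union> {b})" using c3_cons[OF pf cb iI bM] by blast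
  then have "\<beta> \<union> {b} = \<beta>" using dyn unfolding dynamic_element_def by blast
  then show "b \<in> \<beta>" by blast
qed

lemma dyn_exists:
  assumes pf: "prefactor_system I le F M tri"
    and cons: "consistent I le F M tri \<alpha>"
  shows "\<exists>\<beta>. dynamic_element I le F M tri \<beta> \<and> \<alpha> \<subseteq> \<beta>"
proof -
  note f = pf_facts[OF pf]
  let ?A = "{\<beta>. consistent I le F M tri \<beta> \<and> \<alpha> \<subseteq> \<beta>}"
  have "\<forall>C\<in>chains ?A. \<exists>U\<in>?A. \<forall>X\<in>C. X \<subseteq> U"
  proof
    fix C assume C: "C \<in> chains ?A"
    show "\<exists>U\<in>?A. \<forall>X\<in>C. X \<subseteq> U"
    proof (cases "C = {}")
      case True then show ?thesis using cons by blast
    next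
      case False
      then obtain X0 where X0: "X0 \<in> C" by blast
      have CA: "C \<subseteq> ?A" using C chainsD2 by blast
      have "consistent I le F M tri (\<Union>C)"
        unfolding consistent_def
      proof (intro conjI)
        show "\<Union>C \<subseteq> (\<Union>i\<in>I. M i)"
        proof
          fix x assume "x \<in> \<Union>C"
          then obtain X where "X \<in> C" "x \<in> X" by blast
          then have "consistent I le F M tri X" using CA by blast
          then show "x \<in> (\<Union>i\<in>I. M i)" using \<open>x \<in> X\<close> unfolding consistent_def by blast
        qed
        show "\<forall>i\<in>I. \<forall>i'\<in>I. le i i' \<longrightarrow> (\<forall>a\<in>\<Union>C \<inter> M i'. \<forall>b\<in>\<Union>C \<inter> M i. tri a b)"
        proof (intro ballI impI)
          fix i i' a b assume "i \<in> I" "i' \<in> I" "le i i'" "a \<in> \<Union>C \<inter> M i'" "b \<in> \<Union>C \<inter> M i"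
          then obtain X Y where "X \<in> C" "Y \<in> C" "a \<in> X" "b \<in> Y" by blast
          then have "X \<subseteq> Y \<or> Y \<subseteq> X" using chainsD[OF C] by blast
          then obtain Z where "Z \<in> C" "a \<in> Z" "b \<in> Z" using \<open>X \<in> C\<close> \<open>Y \<in> C\<close> \<open>a \<in> X\<close> \<open>b \<in> Y\<close> by blast
          then have cZ: "consistent I le F M tri Z" using CA by blast
          have "a \<in> Z \<inter> M i'" "b \<in> Z \<inter> M i" using \<open>a \<in> Z\<close> \<open>b \<in> Z\<close> \<open>a \<in> \<Union>C \<inter> M i'\<close> \<open>b \<in> \<Union>C \<inter> M i\<close> by blast+
          then show "tri a b" using cZ \<open>i \<in> I\<close> \<open>i' \<in> I\<close> \<open>le i i'\<close>
            unfolding consistent_def by blast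
        qed
        show "index_set I M (\<Union>C) \<in> F"
        proof (rule f(4)[of "index_set I M \<alpha>"])
          show "index_set I M \<alpha> \<in> F" using cons unfolding consistent_def by blast
          have "\<alpha> \<subseteq> \<Union>C" using X0 CA by blast
          then show "index_set I M \<alpha> \<subseteq> index_set I M (\<Union>C)" unfolding index_set_def by blast
          show "index_set I M (\<Union>C) \<subseteq> I" unfolding index_set_def by blast
        qed
      qed
      moreover have "\<alpha> \<subseteq> \<Union>C" using X0 CA by blast
      ultimately show ?thesis by blast
    qed
  qed
  from Zorn_Lemma2[OF this] obtain \<beta> where "\<beta> \<in> ?A" "\<forall>X\<in>?A. \<beta> \<subseteq> X \<longrightarrow> X = \<beta>" by blast
  then have "dynamic_element I le F M tri \<beta>" "\<alpha> \<subseteq> \<beta>"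
    unfolding dynamic_element_def by blast+
  then show ?thesis by blast
qed

lemma dyn_closure_char:
  assumes pf: "prefactor_system I le F M tri"
    and cons: "consistent I le F M tri \<alpha>"
  shows "dyn_closure I le F M tri \<alpha> = {b. \<exists>i\<in>I. b \<in> M i \<and> c3 I le M tri \<alpha> b}"
proof -
  obtain \<beta> where b: "dynamic_element I le F M tri \<beta> \<and> \<alpha> \<subseteq> \<beta>" using dyn_exists[OF pf cons] by blast
  have "dyn_closure I le F M tri \<alpha> = \<beta>"
    unfolding dyn_closure_def
  proof (rule the_equality)
    show "dynamic_element I le F M tri \<beta> \<and> \<alpha> \<subseteq> \<beta>" by (rule b)
    fix \<gamma> assume "dynamic_element I le F M tri \<gamma> \<and> \<alpha> \<subseteq> \<gamma>"
    then have "\<gamma> = {b. \<exists>i\<in>I. b \<in> M i \<and> c3 I le M tri \<alpha> b}"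
      using dyn_char[OF pf cons] by blast
    moreover have "\<beta> = {b. \<exists>i\<in>I. b \<in> M i \<and> c3 I le M tri \<alpha> b}"
      using dyn_char[OF pf cons] b by blast
    ultimately show "\<gamma> = \<beta>" by simp
  qed
  moreover have "\<beta> = {b. \<exists>i\<in>I. b \<in> M i \<and> c3 I le M tri \<alpha> b}"
    using dyn_char[OF pf cons] b by blast
  ultimately show ?thesis by simp
qed

theorem lemma2p9:
  assumes pf: "prefactor_system I le F M tri"
    and cons: "consistent I le F M tri \<alpha>"
    and iI: "i \<in> I" and bM: "b \<in> M i"
  shows "(b \<in> dyn_closure I le F M tri \<alpha> \<longleftrightarrow> consistent I le F M tri (\<alpha> \<union> {b}))
       \<and> (consistent I le F M tri (\<alpha> \<union> {b}) \<longleftrightarrow>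
            (\<forall>j\<in>I. \<exists>i'\<in>I. le j i' \<and> (\<exists>a\<in>\<alpha> \<inter> M i'. tri a b)))
       \<and> ((\<forall>j\<in>I. \<exists>i'\<in>I. le j i' \<and> (\<exists>a\<in>\<alpha> \<inter> M i'. tri a b)) \<longleftrightarrow>
            (\<forall>i'\<in>I. le i i' \<longrightarrow> (\<forall>a\<in>\<alpha> \<inter> M i'. tri a b)))
       \<and> ((\<forall>i'\<in>I. le i i' \<longrightarrow> (\<forall>a\<in>\<alpha> \<inter> M i'. tri a b)) \<longleftrightarrow>
            (\<exists>S\<in>F. S \<subseteq> {i'\<in>I. \<exists>a\<in>\<alpha> \<inter> M i'. tri a b}))"
proof -
  note f = pf_facts[OF pf]
  let ?c3 = "c3 I le M tri \<alpha> b"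
  let ?c4 = "\<forall>i'\<in>I. le i i' \<longrightarrow> (\<forall>a\<in>\<alpha> \<inter> M i'. tri a b)"
  let ?c5 = "\<exists>S\<in>F. S \<subseteq> {i'\<in>I. \<exists>a\<in>\<alpha> \<inter> M i'. tri a b}"
  have e1: "b \<in> dyn_closure I le F M tri \<alpha> \<longleftrightarrow> ?c3"
    using dyn_closure_char[OF pf cons] iI bM by blast
  have e34: "?c3 \<longleftrightarrow> ?c4" using c3_c4[OF pf cons iI bM] c4_c3[OF pf cons iI] by blast
  have e2: "consistent I le F M tri (\<alpha> \<union> {b}) \<longleftrightarrow> ?c3"
  proof
    assume "consistent I le F M tri (\<alpha> \<union> {b})"
    then have ?c4 using iI bM unfolding consistent_def by blast
    then show ?c3 using e34 by blast
  qed (rule c3_cons[OF pf cons iI bM])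
  have e45: "?c4 \<longleftrightarrow> ?c5"
  proof
    assume ?c4
    have "index_set I M \<alpha> \<inter> {i'\<in>I. le i i'} \<in> F"
      using f(5) cons up_in_F[OF pf iI] unfolding consistent_def by blast
    moreover have "index_set I M \<alpha> \<inter> {i'\<in>I. le i i'} \<subseteq> {i'\<in>I. \<exists>a\<in>\<alpha> \<inter> M i'. tri a b}"
      using \<open>?c4\<close> unfolding index_set_def by blast
    ultimately show ?c5 by blast
  next
    assume ?c5
    then obtain S where "S \<in> F" "S \<subseteq> {i'\<in>I. \<exists>a\<in>\<alpha> \<inter> M i'. tri a b}" by blast
    moreover have "cofinal_in I le S" using f(3) \<open>S \<in> F\<close> by blast
    ultimately have ?c3 unfolding c3_def cofinal_in_def by blast
    then show ?c4 using e34 by blast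
  qed
  have e3: "?c3 \<longleftrightarrow> (\<forall>j\<in>I. \<exists>i'\<in>I. le j i' \<and> (\<exists>a\<in>\<alpha> \<inter> M i'. tri a b))"
    by (simp only: c3_def)
  show ?thesis
    apply (intro conjI)
       apply (subst e1, subst e2, rule refl)
      apply (subst e2, subst e3, rule refl)
     apply (subst e3[symmetric], rule e34)
    apply (rule e45)
    done
qed

end
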